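(* Let $\theta(q,x):=\sum_{j=0}^{\infty}q^{j(j+1)/2}x^j$, $\Theta^*(q,x):=\sum_{j=-\infty}^{\infty}q^{j(j+1)/2}x^j$ and $G(q,x):=\sum_{j=-\infty}^{-1}q^{j(j+1)/2}x^j$, so that $\theta=\Theta^*-G$. For $q\in[0.5,1)$ and $x$ on the arc $C_2:=\{x\in\mathbb{C}:\ |x|=3,\ \arg x\in[3\pi/4,\pi]\}$, one has $|G(q,x)|>|\Theta^*(q,x)|$, hence $|\theta(q,x)|>0$. *)

theory Defs
  imports "HOL-Analysis.Analysis"
begin

text \<open>Coefficient q^(j(j+1)/2) for integer j; j(j+1)/2 is always a nonnegative integer.\<close>
definition tcoef :: "real \<Rightarrow> int \<Rightarrow> complex" where
  "tcoef q j = complex_of_real (q ^ nat (j * (j + 1) div 2))"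

definition ptheta :: "real \<Rightarrow> complex \<Rightarrow> complex" where
  "ptheta q x = (\<Sum>j. tcoef q (int j) * x ^ j)"

definition Theta_star :: "real \<Rightarrow> complex \<Rightarrow> complex" where
  "Theta_star q x = infsum (\<lambda>j::int. tcoef q j * x powi j) UNIV"

definition Gfun :: "real \<Rightarrow> complex \<Rightarrow> complex" where
  "Gfun q x = infsum (\<lambda>j::int. tcoef q j * x powi j) {..-1}"

end

theory Submission
  imports Defs
begin

fun qb :: "'a::comm_ring_1 \<Rightarrow> nat \<Rightarrow> nat \<Rightarrow> 'a" where
  "qb q N 0 = 1"
| "qb q 0 (Suc k) = 0"
| "qb q (Suc N) (Suc k) = qb q N k + q ^ Suc k * qb q N (Suc k)"

lemma qb_gt: "N < k \<Longrightarrow> qb q N k = 0"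
proof (induction N arbitrary: k)
  case 0 then show ?case by (cases k) auto
next
  case (Suc N) then show ?case by (cases k) auto
qed

definition tr :: "nat \<Rightarrow> nat" where "tr k = k * (k - 1) div 2"

lemma tr_Suc: "tr (Suc k) = tr k + k"
  unfolding tr_def by (induction k) (auto simp: algebra_simps)

lemma cauchy_qbin:
  fixes q y z :: "'a::comm_ring_1"
  shows "(\<Prod>i<N. y + z * q ^ i) = (\<Sum>k\<le>N. qb q N k * q ^ tr k * z ^ k * y ^ (N - k))"
proof (induction N arbitrary: z)
  case 0 then show ?case by (simp add: tr_def)
next
  case (Suc N)
  have "(\<Prod>i<Suc N. y + z * q ^ i) = (y + z) * (\<Prod>i<N. y + (z * q) * q ^ i)"
    by (subst prod.lessThan_Suc_shift) (simp add: mult.assoc del: prod.lessThan_Suc)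
  also have "\<dots> = (y + z) * (\<Sum>k\<le>N. qb q N k * q ^ tr k * (z*q) ^ k * y ^ (N - k))"
    by (simp add: Suc)
  also have "\<dots> = (\<Sum>k\<le>N. qb q N k * q ^ tr k * (z*q) ^ k * y ^ (Suc N - k))
       + (\<Sum>k\<le>N. qb q N k * q ^ tr (Suc k) * z ^ Suc k * y ^ (N - k))"
    by (simp add: distrib_right sum_distrib_left Suc_diff_le tr_Suc power_add power_mult_distrib sum.distrib mult_ac)
  also have "(\<Sum>k\<le>N. qb q N k * q ^ tr k * (z*q) ^ k * y ^ (Suc N - k))
      = y ^ Suc N + (\<Sum>k\<le>N. q ^ Suc k * qb q N (Suc k) * q ^ tr (Suc k) * z ^ Suc k * y ^ (N - k))"
  proof -
    have "(\<Sum>k\<le>N. qb q N k * q ^ tr k * (z*q) ^ k * y ^ (Suc N - k))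
       = (\<Sum>k\<le>Suc N. qb q N k * q ^ tr k * (z*q) ^ k * y ^ (Suc N - k))"
      by (simp add: qb_gt)
    also have "\<dots> = y ^ Suc N + (\<Sum>k\<le>N. qb q N (Suc k) * q ^ tr (Suc k) * (z*q) ^ Suc k * y ^ (N - k))"
      by (subst sum.atMost_Suc_shift) (simp add: tr_def)
    finally show ?thesis by (simp add: power_mult_distrib mult_ac)
  qed
  finally have "(\<Prod>i<Suc N. y + z * q ^ i) = y ^ Suc N + (\<Sum>k\<le>N. (qb q N k + q ^ Suc k * qb q N (Suc k)) * q ^ tr (Suc k) * z ^ Suc k * y ^ (N - k))"
    by (simp add: sum.distrib distrib_right algebra_simps)
  also have "\<dots> = (\<Sum>k\<le>Suc N. qb q (Suc N) k * q ^ tr k * z ^ k * y ^ (Suc N - k))"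
    by (subst sum.atMost_Suc_shift) (simp add: tr_def)
  finally show ?case .
qed

definition Qp :: "'a::comm_ring_1 \<Rightarrow> nat \<Rightarrow> 'a" where
  "Qp q n = (\<Prod>m\<in>{1..n}. 1 - q ^ m)"

lemma Qp_0[simp]: "Qp q 0 = 1" by (simp add: Qp_def)
lemma Qp_Suc: "Qp q (Suc n) = Qp q n * (1 - q ^ Suc n)"
  by (simp add: Qp_def prod.nat_ivl_Suc' mult.commute)

lemma qb_closed: "k \<le> N \<Longrightarrow> qb q N k * Qp q k * Qp q (N - k) = Qp q N"
proof (induction N arbitrary: k)
  case 0 then show ?case by simp
next
  case (Suc N)
  show ?case
  proof (cases k)
    case 0 then show ?thesis by simp
  next
    case (Suc k')
    have A: "qb q N k' * Qp q (Suc k') * Qp q (N - k') = Qp q N * (1 - q ^ Suc k')"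
    proof -
      have "qb q N k' * Qp q (Suc k') * Qp q (N - k') = (qb q N k' * Qp q k' * Qp q (N - k')) * (1 - q ^ Suc k')"
        by (simp only: Qp_Suc mult_ac)
      then show ?thesis using Suc.IH[of k'] Suc.prems Suc by simp
    qed
    have B: "q ^ Suc k' * qb q N (Suc k') * Qp q (Suc k') * Qp q (N - k') = q ^ Suc k' * Qp q N * (1 - q ^ (N - k'))"
    proof (cases "Suc k' \<le> N")
      case True
      then have e: "N - k' = Suc (N - Suc k')" by simp
      have "q ^ Suc k' * qb q N (Suc k') * Qp q (Suc k') * Qp q (N - k')
          = q ^ Suc k' * (qb q N (Suc k') * Qp q (Suc k') * Qp q (N - Suc k')) * (1 - q ^ (N - k'))"
        by (simp only: e Qp_Suc mult_ac)
      then show ?thesis using Suc.IH[OF True] by simp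
    next
      case False
      then have "N = k'" using Suc Suc.prems by simp
      then show ?thesis by (simp add: qb_gt)
    qed
    have "qb q (Suc N) k * Qp q k * Qp q (Suc N - k)
        = qb q N k' * Qp q (Suc k') * Qp q (N - k') + q ^ Suc k' * qb q N (Suc k') * Qp q (Suc k') * Qp q (N - k')"
      using Suc by (simp add: algebra_simps)
    also have "\<dots> = Qp q N * (1 - q ^ Suc k') + q ^ Suc k' * Qp q N * (1 - q ^ (N - k'))"
      using A B by simp
    also have "\<dots> = Qp q N * (1 - q ^ (Suc k' + (N - k')))"
      by (simp add: algebra_simps power_add)
    also have "Suc k' + (N - k') = Suc N" using Suc Suc.prems by simp
    finally show ?thesis by (simp add: Qp_Suc)
  qed
qed

lemma sum_split_mid:
  fixes f :: "nat \<Rightarrow> 'a::comm_monoid_add"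
  shows "(\<Sum>k\<le>n+n. f k) = (\<Sum>i\<le>n. f (n+i)) + (\<Sum>i<n. f (n - Suc i))"
proof -
  have "{..n+n} = {..<n} \<union> {n..n+n}" by auto
  then have "(\<Sum>k\<le>n+n. f k) = (\<Sum>k<n. f k) + (\<Sum>k\<in>{n..n+n}. f k)"
    by (simp add: sum.union_disjoint[symmetric] ivl_disj_int)
  also have "(\<Sum>k\<in>{n..n+n}. f k) = (\<Sum>i\<le>n. f (n+i))"
    using sum.shift_bounds_cl_nat_ivl[of f 0 n n] by (simp add: atLeast0AtMost add.commute)
  also have "(\<Sum>k<n. f k) = (\<Sum>i<n. f (n - Suc i))"
    by (rule sum.nat_diff_reindex[symmetric])
  finally show ?thesis by (simp add: add.commute)
qed

lemma prod_lessThan_add: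
  fixes f :: "nat \<Rightarrow> 'a::comm_monoid_mult"
  shows "(\<Prod>i<n+k. f i) = (\<Prod>i<n. f i) * (\<Prod>i<k. f (n+i))"
  by (induction k) (auto simp: mult_ac)

lemma sum_lessThan_id: "(\<Sum>i<n. i) = tr n"
  by (induction n) (simp_all add: tr_Suc tr_def[of 0])

definition Pfin :: "'a::field \<Rightarrow> 'a \<Rightarrow> nat \<Rightarrow> 'a" where
  "Pfin q x n = (\<Prod>m<n. 1 + x * q ^ Suc m) * (\<Prod>i<n. 1 + q ^ i / x)"

lemma jtp_fin0:
  fixes q x :: "'a::field"
  assumes "x \<noteq> 0"
  shows "x ^ n * q ^ (tr n + n * (n - 1)) * Pfin q x n
       = (\<Sum>k\<le>n+n. qb q (n+n) k * q ^ (tr k + (n - 1) * (n + n - k)) * x ^ k)"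
proof -
  have e1: "x ^ n * (\<Prod>i<n. 1 + q ^ i / x) = (\<Prod>i<n. x + q ^ i)"
  proof -
    have "x ^ n * (\<Prod>i<n. 1 + q ^ i / x) = (\<Prod>i<n. x * (1 + q ^ i / x))"
      by (simp add: prod.distrib)
    also have "\<dots> = (\<Prod>i<n. x + q ^ i)"
      using assms by (simp add: distrib_left)
    finally show ?thesis .
  qed
  have e2: "(\<Prod>i<n. q ^ (n - 1) + x * q ^ i) = q ^ tr n * (\<Prod>i<n. x + q ^ i)"
  proof -
    have "(\<Prod>i<n. q ^ (n - 1) + x * q ^ i) = (\<Prod>i<n. q ^ i * (x + q ^ (n - Suc i)))"
    proof (rule prod.cong[OF refl])
      fix i assume "i \<in> {..<n}"
      then have "n - 1 = i + (n - Suc i)" by auto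
      then show "q ^ (n - 1) + x * q ^ i = q ^ i * (x + q ^ (n - Suc i))"
        by (simp add: power_add algebra_simps)
    qed
    also have "\<dots> = q ^ (\<Sum>i<n. i) * (\<Prod>i<n. x + q ^ (n - Suc i))"
      by (simp add: prod.distrib power_sum)
    also have "(\<Prod>i<n. x + q ^ (n - Suc i)) = (\<Prod>i<n. x + q ^ i)"
      by (rule prod.nat_diff_reindex)
    finally show ?thesis by (simp add: sum_lessThan_id)
  qed
  have e3: "(\<Prod>i<n. q ^ (n - 1) + x * q ^ (n + i)) = q ^ (n * (n - 1)) * (\<Prod>m<n. 1 + x * q ^ Suc m)"
  proof -
    have "(\<Prod>i<n. q ^ (n - 1) + x * q ^ (n + i)) = (\<Prod>i<n. q ^ (n - 1) * (1 + x * q ^ Suc i))"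
    proof (rule prod.cong[OF refl])
      fix i assume "i \<in> {..<n}"
      then have "n + i = (n - 1) + Suc i" by auto
      then have "q ^ (n + i) = q ^ (n - 1) * q ^ Suc i" by (metis power_add)
      then show "q ^ (n - 1) + x * q ^ (n + i) = q ^ (n - 1) * (1 + x * q ^ Suc i)"
        by (simp add: algebra_simps)
    qed
    also have "\<dots> = q ^ (n * (n - 1)) * (\<Prod>m<n. 1 + x * q ^ Suc m)"
      by (simp add: prod.distrib power_mult[symmetric] mult.commute)
    finally show ?thesis .
  qed
  have "(\<Prod>i<n+n. q ^ (n - 1) + x * q ^ i) = x ^ n * q ^ (tr n + n * (n - 1)) * Pfin q x n"
    unfolding prod_lessThan_add e2 e3 Pfin_def
    by (simp add: e1[symmetric] power_add mult_ac)
  moreover have "(\<Prod>i<n+n. q ^ (n - 1) + x * q ^ i)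
      = (\<Sum>k\<le>n+n. qb q (n+n) k * q ^ tr k * x ^ k * (q ^ (n - 1)) ^ (n + n - k))"
    by (rule cauchy_qbin)
  ultimately show ?thesis by (simp add: power_mult power_add mult_ac)
qed

lemma tr2: "2 * tr k = k * (k - 1)"
proof -
  have "even (k * (k - 1))" by (cases k) auto
  then show ?thesis unfolding tr_def by simp
qed

lemma E1: assumes "i \<le> n"
  shows "tr (n+i) + (n-1)*(n+n-(n+i)) = tr n + n*(n-1) + tr (Suc i)"
proof -
  obtain d where d: "n = i + d" using assms le_Suc_ex by blast
  have "2 * (tr (n+i) + (n-1)*(n+n-(n+i))) = 2 * (tr n + n*(n-1) + tr (Suc i))"
  proof (cases n)
    case 0 then show ?thesis using d by (simp add: tr_def)
  next
    case (Suc m)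
    then have "m + 1 = i + d" using d by simp
    then show ?thesis unfolding distrib_left tr2 using Suc d
      by (cases i; cases d) (simp_all add: algebra_simps)
  qed
  then show ?thesis by simp
qed

lemma E2: assumes "i < n"
  shows "tr (n - Suc i) + (n-1)*(n+n-(n - Suc i)) = tr n + n*(n-1) + tr (Suc i)"
proof -
  obtain d where d: "n = Suc (i + d)" using assms less_imp_Suc_add by blast
  have "2 * (tr (n - Suc i) + (n-1)*(n+n-(n - Suc i))) = 2 * (tr n + n*(n-1) + tr (Suc i))"
    unfolding distrib_left tr2 using d
    by (cases i; cases d) (simp_all add: algebra_simps)
  then show ?thesis by simp
qed

lemma tcoef_pos: "tcoef q (int i) = complex_of_real (q ^ tr (Suc i))"
proof -
  have "int i * (int i + 1) div 2 = int (Suc i * i div 2)"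
    by (simp add: zdiv_int algebra_simps)
  then show ?thesis unfolding tcoef_def tr_def by simp
qed

lemma tcoef_neg: "tcoef q (- int i - 1) = complex_of_real (q ^ tr (Suc i))"
proof -
  have "(- int i - 1) * (- int i - 1 + 1) div 2 = int (Suc i * i div 2)"
    by (simp add: zdiv_int algebra_simps)
  then show ?thesis unfolding tcoef_def tr_def by simp
qed

definition V :: "real \<Rightarrow> nat \<Rightarrow> nat \<Rightarrow> real" where
  "V q n i = Qp q n ^ 2 / (Qp q (n+i) * Qp q (n-i))"

definition u :: "real \<Rightarrow> complex \<Rightarrow> int \<Rightarrow> complex" where
  "u q x j = tcoef q j * x powi j"

lemma Qp_pos: assumes "0 < (q::real)" "q < 1" shows "0 < Qp q n"
  unfolding Qp_def by (rule prod_pos) (use assms in \<open>simp add: power_less_one_iff\<close>)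

lemma Qp_of_real: "Qp (complex_of_real q) n = complex_of_real (Qp q n)"
  by (simp add: Qp_def)

lemma jtp_fin:
  assumes q: "0 < q" "q < 1" and x: "x \<noteq> 0"
  shows "Pfin (complex_of_real q) x n * complex_of_real (Qp q n ^ 2 / Qp q (n+n))
       = (\<Sum>i\<le>n. complex_of_real (V q n i) * u q x (int i))
         + (\<Sum>i<n. complex_of_real (V q n (Suc i)) * u q x (- int i - 1))"
proof -
  define c where "c = complex_of_real q"
  define T where "T = tr n + n * (n - 1)"
  define w where "w = complex_of_real (Qp q n ^ 2 / Qp q (n+n))"
  have Qnz: "\<And>m. Qp q m \<noteq> 0" using Qp_pos[OF q] by (metis less_irrefl)
  have qbc: "qb c (n+n) k = complex_of_real (Qp q (n+n) / (Qp q k * Qp q (n+n-k)))" if "k \<le> n+n" for k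
  proof -
    have "qb c (n+n) k * Qp c k * Qp c (n+n-k) = Qp c (n+n)" by (rule qb_closed[OF that])
    then have "qb c (n+n) k * complex_of_real (Qp q k * Qp q (n+n-k)) = complex_of_real (Qp q (n+n))"
      by (simp add: c_def Qp_of_real mult.assoc)
    then show ?thesis using Qnz by (simp add: field_simps)
  qed
  define f where "f k = complex_of_real (Qp q n ^ 2 / (Qp q k * Qp q (n+n-k))) * c ^ (tr k + (n - 1) * (n + n - k)) * x ^ k" for k
  have "x ^ n * c ^ T * (Pfin c x n * w) = (\<Sum>k\<le>n+n. qb c (n+n) k * c ^ (tr k + (n - 1) * (n + n - k)) * x ^ k) * w"
    using jtp_fin0[OF x, of n c] by (simp add: T_def mult_ac)
  also have "\<dots> = (\<Sum>k\<le>n+n. f k)"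
    unfolding sum_distrib_right
  proof (rule sum.cong[OF refl])
    fix k assume "k \<in> {..n+n}"
    then have h: "qb c (n+n) k * w = complex_of_real (Qp q n ^ 2 / (Qp q k * Qp q (n+n-k)))"
      using Qnz by (simp add: qbc w_def field_simps)
    have "qb c (n+n) k * c ^ (tr k + (n - 1) * (n + n - k)) * x ^ k * w
       = (qb c (n+n) k * w) * c ^ (tr k + (n - 1) * (n + n - k)) * x ^ k" by (simp only: mult_ac)
    also have "\<dots> = f k" unfolding f_def by (simp only: h)
    finally show "qb c (n+n) k * c ^ (tr k + (n - 1) * (n + n - k)) * x ^ k * w = f k" .
  qed
  also have "\<dots> = (\<Sum>i\<le>n. f (n+i)) + (\<Sum>i<n. f (n - Suc i))" by (rule sum_split_mid)
  also have "(\<Sum>i\<le>n. f (n+i)) = x ^ n * c ^ T * (\<Sum>i\<le>n. complex_of_real (V q n i) * u q x (int i))"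
    unfolding sum_distrib_left
  proof (rule sum.cong[OF refl])
    fix i assume "i \<in> {..n}"
    then have i: "i \<le> n" by simp
    have "n + n - (n + i) = n - i" by simp
    moreover have "c ^ (tr (n+i) + (n - 1) * (n + n - (n+i))) = c ^ T * c ^ tr (Suc i)"
      using E1[OF i] by (simp add: T_def power_add)
    ultimately show "f (n+i) = x ^ n * c ^ T * (complex_of_real (V q n i) * u q x (int i))"
      unfolding f_def V_def u_def tcoef_pos c_def by (simp add: power_add mult_ac)
  qed
  also have "(\<Sum>i<n. f (n - Suc i)) = x ^ n * c ^ T * (\<Sum>i<n. complex_of_real (V q n (Suc i)) * u q x (- int i - 1))"
    unfolding sum_distrib_left
  proof (rule sum.cong[OF refl])
    fix i assume "i \<in> {..<n}"
    then have i: "i < n" by simp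
    have e: "n + n - (n - Suc i) = n + Suc i" using i by simp
    have "c ^ (tr (n - Suc i) + (n - 1) * (n + n - (n - Suc i))) = c ^ T * c ^ tr (Suc i)"
      using E2[OF i] by (simp add: T_def power_add)
    moreover have "x ^ (n - Suc i) = x ^ n * x powi (- int i - 1)"
    proof -
      have "n = (n - Suc i) + Suc i" using i by simp
      then have "x ^ n = x ^ (n - Suc i) * x ^ Suc i" by (metis power_add)
      moreover have "x powi (- int i - 1) = inverse (x ^ Suc i)"
        by (simp add: power_int_diff power_int_minus x field_simps)
      ultimately show ?thesis using x by (simp add: field_simps)
    qed
    ultimately show "f (n - Suc i) = x ^ n * c ^ T * (complex_of_real (V q n (Suc i)) * u q x (- int i - 1))"
      unfolding f_def V_def u_def tcoef_neg c_def e by (simp add: mult_ac)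
  qed
  finally have "x ^ n * c ^ T * (Pfin c x n * w) = x ^ n * c ^ T *
     ((\<Sum>i\<le>n. complex_of_real (V q n i) * u q x (int i))
         + (\<Sum>i<n. complex_of_real (V q n (Suc i)) * u q x (- int i - 1)))"
    by (simp add: distrib_left)
  moreover have "x ^ n * c ^ T \<noteq> 0" using x q by (simp add: c_def)
  ultimately have "Pfin c x n * w = (\<Sum>i\<le>n. complex_of_real (V q n i) * u q x (int i))
         + (\<Sum>i<n. complex_of_real (V q n (Suc i)) * u q x (- int i - 1))"
    using mult_left_cancel by blast
  then show ?thesis unfolding w_def c_def .
qed

definition Rr :: "real \<Rightarrow> nat \<Rightarrow> nat \<Rightarrow> real" where
  "Rr q m i = (\<Prod>j<i. 1 - q ^ (m + Suc j))"

lemma Qp_add: "Qp q (m + i) = Qp q m * Rr q m i"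
  by (induction i) (simp_all add: Rr_def Qp_Suc mult_ac)

lemma qpow_lt1: assumes "0 < (q::real)" "q < 1" "0 < k" shows "q ^ k < 1"
  using assms by (simp add: power_less_one_iff)

lemma Rr_pos: assumes "0 < q" "q < 1" shows "0 < Rr q m i"
  unfolding Rr_def by (rule prod_pos) (use qpow_lt1[OF assms, of "m + Suc _"] in simp)

lemma Rr_mono: assumes "0 < q" "q < 1" "m \<le> m'" shows "Rr q m i \<le> Rr q m' i"
  unfolding Rr_def
proof (rule prod_mono)
  fix j assume "j \<in> {..<i}"
  have "q ^ (m' + Suc j) \<le> q ^ (m + Suc j)"
    using assms by (intro power_decreasing) auto
  then show "0 \<le> 1 - q ^ (m + Suc j) \<and> 1 - q ^ (m + Suc j) \<le> 1 - q ^ (m' + Suc j)"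
    using qpow_lt1[OF assms(1,2), of "m + Suc j"] by simp
qed

lemma V_eq: assumes "0 < q" "q < 1" "i \<le> n" shows "V q n i = Rr q (n - i) i / Rr q n i"
proof -
  have a: "Qp q n = Qp q (n - i) * Rr q (n - i) i" using Qp_add[of q "n - i" i] assms by simp
  have b: "Qp q (n + i) = Qp q n * Rr q n i" by (rule Qp_add)
  have "Qp q n \<noteq> 0" "Qp q (n - i) \<noteq> 0" "Rr q n i \<noteq> 0"
    using Qp_pos[OF assms(1,2)] Rr_pos[OF assms(1,2)] by (metis less_irrefl)+
  then have "V q n i = Qp q n / (Rr q n i * Qp q (n - i))"
    unfolding V_def b by (simp add: power2_eq_square field_simps)
  also have "\<dots> = Rr q (n - i) i / Rr q n i"
    using \<open>Qp q (n - i) \<noteq> 0\<close> by (subst a) (simp add: field_simps)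
  finally show ?thesis .
qed

lemma V_bounds: assumes "0 < q" "q < 1" "i \<le> n" shows "0 \<le> V q n i" "V q n i \<le> 1"
  using V_eq[OF assms] Rr_pos[OF assms(1,2)] Rr_mono[OF assms(1,2), of "n - i" n i]
  by (auto simp: divide_le_eq_1 less_imp_le)

lemma Rr_tendsto: assumes "0 < q" "q < 1" shows "(\<lambda>m. Rr q m i) \<longlonglongrightarrow> 1"
proof -
  have "(\<lambda>m. \<Prod>j<i. 1 - q ^ m * q ^ Suc j) \<longlonglongrightarrow> (\<Prod>j<i. 1 - 0 * q ^ Suc j)"
    using assms by (intro tendsto_intros LIMSEQ_power_zero) auto
  moreover have "\<And>m. Rr q m i = (\<Prod>j<i. 1 - q ^ m * q ^ Suc j)"
    unfolding Rr_def by (simp only: power_add)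
  ultimately show ?thesis by simp
qed

lemma V_tendsto: assumes "0 < q" "q < 1" shows "(\<lambda>n. V q n i) \<longlonglongrightarrow> 1"
proof -
  have "(\<lambda>n. Rr q (n - i) i / Rr q n i) \<longlonglongrightarrow> 1 / 1"
  proof (intro tendsto_intros)
    show "(\<lambda>n. Rr q (n - i) i) \<longlonglongrightarrow> 1"
      using filterlim_compose[OF Rr_tendsto[OF assms] filterlim_minus_const_nat_at_top[of i]]
      by (simp add: o_def)
  qed (use Rr_tendsto[OF assms] in auto)
  then have "(\<lambda>n. Rr q (n - i) i / Rr q n i) \<longlonglongrightarrow> 1" by simp
  then show ?thesis
    by (rule Lim_transform_eventually)
       (use eventually_ge_at_top[of i] in \<open>eventually_elim, simp add: V_eq[OF assms]\<close>)
qed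

lemma norm_u_pos: assumes "0 < q" "cmod x = 3"
  shows "norm (u q x (int k)) = q ^ tr (Suc k) * 3 ^ k"
  unfolding u_def tcoef_pos norm_mult power_int_of_nat norm_power assms(2) norm_of_real
  using assms(1) by (simp add: field_simps)

lemma powi_neg: "(x::complex) powi (- int k - 1) = inverse (x ^ Suc k)"
proof -
  have "x powi (- int k - 1) = x powi (- int (Suc k))" by (rule arg_cong[where f="power_int x"]) simp
  also have "\<dots> = inverse (x powi int (Suc k))" by (rule power_int_minus)
  also have "\<dots> = inverse (x ^ Suc k)" by (simp only: power_int_of_nat)
  finally show ?thesis .
qed

lemma norm_u_neg: assumes "0 < q" "cmod x = 3"
  shows "norm (u q x (- int k - 1)) = q ^ tr (Suc k) / 3 ^ Suc k"
  unfolding u_def tcoef_neg powi_neg norm_mult norm_inverse norm_power assms(2) norm_of_real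
  using assms(1) by (simp add: field_simps)

lemma summable_pos: assumes "0 < q" "q < 1" "cmod x = 3"
  shows "summable (\<lambda>k. norm (u q x (int k)))"
proof -
  obtain N where N: "q ^ N < 1/6"
    using real_arch_pow_inv[of "1/6" q] assms by auto
  show ?thesis
  proof (rule summable_ratio_test[where c="1/2" and N=N])
    fix n assume n: "N \<le> n"
    have "q ^ Suc n \<le> q ^ N" using assms n by (intro power_decreasing) auto
    then have h: "3 * q ^ Suc n \<le> 1/2" using N by simp
    have "norm (norm (u q x (int (Suc n)))) = q ^ tr (Suc (Suc n)) * 3 ^ Suc n"
      using norm_u_pos[OF assms(1,3), of "Suc n"] assms(1) by simp
    also have "\<dots> = (3 * q ^ Suc n) * (q ^ tr (Suc n) * 3 ^ n)"
      unfolding tr_Suc[of "Suc n"] power_add by (simp add: mult_ac)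
    also have "\<dots> \<le> 1/2 * (q ^ tr (Suc n) * 3 ^ n)"
      using h assms by (intro mult_right_mono) auto
    finally show "norm (norm (u q x (int (Suc n)))) \<le> 1/2 * norm (norm (u q x (int n)))"
      using assms by (simp add: norm_u_pos)
  qed auto
qed

lemma summable_neg: assumes "0 < q" "q < 1" "cmod x = 3"
  shows "summable (\<lambda>k. norm (u q x (- int k - 1)))"
proof (rule summable_comparison_test[where g="\<lambda>k. (1/3) ^ Suc k"])
  show "summable (\<lambda>k. (1/3::real) ^ Suc k)"
    using summable_geometric[of "1/3::real"] by (subst summable_Suc_iff) simp
  show "\<exists>N. \<forall>n\<ge>N. norm (norm (u q x (- int n - 1))) \<le> (1/3) ^ Suc n"
  proof (intro exI allI impI)
    fix n :: nat
    have "q ^ tr (Suc n) \<le> 1" using assms by (simp add: power_le_one)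
    moreover have "(1/3::real) ^ Suc n = 1 / 3 ^ Suc n" by (rule power_one_over)
    ultimately show "norm (norm (u q x (- int n - 1))) \<le> (1/3) ^ Suc n"
      using assms by (simp only: norm_u_neg real_norm_def abs_of_nonneg)
        (auto intro: divide_right_mono)
  qed
qed

lemma u_fun: "u q x = (\<lambda>j. tcoef q j * x powi j)"
  by (rule ext) (simp add: u_def)

lemma decomp:
  assumes q: "0 < q" "q < 1" and x: "cmod x = 3"
  shows "Theta_star q x = (\<Sum>k. u q x (int k)) + (\<Sum>k. u q x (- int k - 1))"
    and "Gfun q x = (\<Sum>k. u q x (- int k - 1))"
    and "ptheta q x = (\<Sum>k. u q x (int k))"
proof -
  define S1 where "S1 = (\<Sum>k. u q x (int k))"
  define S2 where "S2 = (\<Sum>k. u q x (- int k - 1))"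
  have s1: "summable (\<lambda>k. u q x (int k))"
    by (rule summable_norm_cancel[OF summable_pos[OF q x]])
  have s2: "summable (\<lambda>k. u q x (- int k - 1))"
    by (rule summable_norm_cancel[OF summable_neg[OF q x]])
  have h1: "((\<lambda>k. u q x (int k)) has_sum S1) UNIV"
    unfolding S1_def by (rule norm_summable_imp_has_sum[OF summable_pos[OF q x] summable_sums[OF s1]])
  have h2: "((\<lambda>k. u q x (- int k - 1)) has_sum S2) UNIV"
    unfolding S2_def by (rule norm_summable_imp_has_sum[OF summable_neg[OF q x] summable_sums[OF s2]])
  have H1: "(u q x has_sum S1) (range int)"
  proof -
    have "inj_on int UNIV" by (simp add: inj_on_def)
    then have "(u q x has_sum S1) (int ` UNIV) \<longleftrightarrow> ((u q x \<circ> int) has_sum S1) UNIV" by (rule has_sum_reindex)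
    moreover have "(u q x \<circ> int) = (\<lambda>k. u q x (int k))" by (simp add: o_def)
    ultimately show ?thesis using h1 by simp
  qed
  have inj2: "inj (\<lambda>k::nat. - int k - 1)" by (auto simp: inj_def)
  have H2: "(u q x has_sum S2) (range (\<lambda>k::nat. - int k - 1))"
  proof -
    have "(u q x has_sum S2) (range (\<lambda>k::nat. - int k - 1)) \<longleftrightarrow> ((u q x \<circ> (\<lambda>k::nat. - int k - 1)) has_sum S2) UNIV"
      by (rule has_sum_reindex[OF inj2])
    moreover have "(u q x \<circ> (\<lambda>k::nat. - int k - 1)) = (\<lambda>k. u q x (- int k - 1))" by (simp add: o_def)
    ultimately show ?thesis using h2 by simp
  qed
  have r1: "range int = {0::int..}"
  proof (intro set_eqI iffI)
    fix j :: int assume "j \<in> {0..}"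
    then have "j = int (nat j)" by simp
    then show "j \<in> range int" by (rule image_eqI) simp
  qed auto
  have r2: "range (\<lambda>k::nat. - int k - 1) = {..-1::int}"
  proof (intro set_eqI iffI)
    fix j :: int assume "j \<in> {..-1}"
    then have "j = - int (nat (- j - 1)) - 1" by simp
    then show "j \<in> range (\<lambda>k::nat. - int k - 1)" by (rule image_eqI) simp
  qed auto
  have "(u q x has_sum (S1 + S2)) (range int \<union> range (\<lambda>k::nat. - int k - 1))"
    by (rule has_sum_Un_disjoint[OF H1 H2]) (auto simp: r1 r2)
  moreover have "range int \<union> range (\<lambda>k::nat. - int k - 1) = UNIV"
    unfolding r1 r2 by auto
  ultimately have "(u q x has_sum (S1 + S2)) UNIV" by simp
  then have "infsum (u q x) UNIV = S1 + S2" by (rule infsumI)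
  then show "Theta_star q x = (\<Sum>k. u q x (int k)) + (\<Sum>k. u q x (- int k - 1))"
    unfolding Theta_star_def u_fun[symmetric] S1_def S2_def .
  show "Gfun q x = (\<Sum>k. u q x (- int k - 1))"
  proof -
    have "(u q x has_sum S2) {..-1}" using H2 r2 by simp
    then have "infsum (u q x) {..-1} = S2" by (rule infsumI)
    then show ?thesis unfolding Gfun_def u_fun[symmetric] S2_def .
  qed
  show "ptheta q x = (\<Sum>k. u q x (int k))"
    unfolding ptheta_def u_def power_int_of_nat ..
qed

definition Tn :: "real \<Rightarrow> complex \<Rightarrow> nat \<Rightarrow> complex" where
  "Tn q x n = (\<Sum>i\<le>n. complex_of_real (V q n i) * u q x (int i))
         + (\<Sum>i<n. complex_of_real (V q n (Suc i)) * u q x (- int i - 1))"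

lemma Tn_tendsto:
  assumes q: "0 < q" "q < 1" and x: "cmod x = 3"
  shows "Tn q x \<longlonglongrightarrow> Theta_star q x"
proof -
  define a where "a k n = (if k \<le> n then complex_of_real (V q n k) else 0) * u q x (int k)" for k n
  define b where "b k n = (if k < n then complex_of_real (V q n (Suc k)) else 0) * u q x (- int k - 1)" for k n
  have A: "(\<lambda>n. suminf (\<lambda>k. a k n)) \<longlonglongrightarrow> (\<Sum>k. u q x (int k))"
  proof -
    have "((\<lambda>n. suminf (\<lambda>k. a k n)) \<longlongrightarrow> (\<Sum>k. u q x (int k))) sequentially"
    proof (rule tannerys_theorem[THEN conjunct2, THEN conjunct2])
      fix k
      have "(\<lambda>n. complex_of_real (V q n k) * u q x (int k)) \<longlonglongrightarrow> complex_of_real 1 * u q x (int k)"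
        by (intro tendsto_intros V_tendsto[OF q])
      then have "(\<lambda>n. complex_of_real (V q n k) * u q x (int k)) \<longlonglongrightarrow> u q x (int k)" by simp
      then show "(\<lambda>n. a k n) \<longlonglongrightarrow> u q x (int k)"
        by (rule Lim_transform_eventually)
           (use eventually_ge_at_top[of k] in \<open>eventually_elim, simp add: a_def\<close>)
    next
      show "\<forall>\<^sub>F (k, n) in sequentially \<times>\<^sub>F sequentially. norm (a k n) \<le> norm (u q x (int k))"
      proof (rule always_eventually, clarify)
        fix k n
        show "norm (a k n) \<le> norm (u q x (int k))"
          using V_bounds[OF q, of k n]
          by (auto simp: a_def norm_mult intro!: mult_left_le_one_le)
      qed
    qed (use summable_pos[OF q x] in auto)
    then show ?thesis .
  qed
  have B: "(\<lambda>n. suminf (\<lambda>k. b k n)) \<longlonglongrightarrow> (\<Sum>k. u q x (- int k - 1))"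
  proof -
    have "((\<lambda>n. suminf (\<lambda>k. b k n)) \<longlongrightarrow> (\<Sum>k. u q x (- int k - 1))) sequentially"
    proof (rule tannerys_theorem[THEN conjunct2, THEN conjunct2])
      fix k
      have "(\<lambda>n. complex_of_real (V q n (Suc k)) * u q x (- int k - 1)) \<longlonglongrightarrow> complex_of_real 1 * u q x (- int k - 1)"
        by (intro tendsto_intros V_tendsto[OF q])
      then have "(\<lambda>n. complex_of_real (V q n (Suc k)) * u q x (- int k - 1)) \<longlonglongrightarrow> u q x (- int k - 1)" by simp
      then show "(\<lambda>n. b k n) \<longlonglongrightarrow> u q x (- int k - 1)"
        by (rule Lim_transform_eventually)
           (use eventually_gt_at_top[of k] in \<open>eventually_elim, simp add: b_def\<close>)
    next
      show "\<forall>\<^sub>F (k, n) in sequentially \<times>\<^sub>F sequentially. norm (b k n) \<le> norm (u q x (- int k - 1))"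
      proof (rule always_eventually, clarify)
        fix k n
        show "norm (b k n) \<le> norm (u q x (- int k - 1))"
          using V_bounds[OF q, of "Suc k" n]
          by (auto simp: b_def norm_mult intro!: mult_left_le_one_le)
      qed
    qed (use summable_neg[OF q x] in auto)
    then show ?thesis .
  qed
  have "Tn q x = (\<lambda>n. suminf (\<lambda>k. a k n) + suminf (\<lambda>k. b k n))"
  proof
    fix n
    have "suminf (\<lambda>k. a k n) = (\<Sum>k\<le>n. a k n)" by (rule suminf_finite) (auto simp: a_def)
    also have "\<dots> = (\<Sum>i\<le>n. complex_of_real (V q n i) * u q x (int i))"
      by (rule sum.cong) (auto simp: a_def)
    finally have 1: "suminf (\<lambda>k. a k n) = (\<Sum>i\<le>n. complex_of_real (V q n i) * u q x (int i))" .
    have "suminf (\<lambda>k. b k n) = (\<Sum>k<n. b k n)" by (rule suminf_finite) (auto simp: b_def)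
    also have "\<dots> = (\<Sum>i<n. complex_of_real (V q n (Suc i)) * u q x (- int i - 1))"
      by (rule sum.cong) (auto simp: b_def)
    finally show "Tn q x n = suminf (\<lambda>k. a k n) + suminf (\<lambda>k. b k n)"
      unfolding Tn_def 1 by simp
  qed
  then show ?thesis using tendsto_add[OF A B] decomp(1)[OF q x] by simp
qed

definition af :: "complex \<Rightarrow> real \<Rightarrow> real" where "af x t = cmod (1 + x * complex_of_real t)"
definition bf :: "complex \<Rightarrow> real \<Rightarrow> real" where "bf x t = cmod (1 + complex_of_real t / x)"
definition ff :: "real \<Rightarrow> complex \<Rightarrow> nat \<Rightarrow> real" where
  "ff q x m = (1 - q ^ m) * af x (q ^ m) * bf x (q ^ m)"

lemma Qp_lessThan: "Qp q n = (\<Prod>m<n. 1 - q ^ Suc m)"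
  by (induction n) (simp_all add: Qp_Suc)

lemma norm_Pfin: "cmod (Pfin (complex_of_real q) x n) = (\<Prod>m<n. af x (q ^ Suc m)) * (\<Prod>i<n. bf x (q ^ i))"
  unfolding Pfin_def norm_mult prod_norm[symmetric] af_def bf_def
  by (simp add: mult.commute)

lemma Tn_identity:
  assumes q: "0 < q" "q < 1" and x: "x \<noteq> 0"
  shows "cmod (Tn q x n) * Rr q n n * bf x (q ^ n) = bf x 1 * (\<Prod>m<n. ff q x (Suc m))"
proof -
  have Tn: "Tn q x n = Pfin (complex_of_real q) x n * complex_of_real (Qp q n ^ 2 / Qp q (n+n))"
    unfolding Tn_def by (rule jtp_fin[OF q x, symmetric])
  have pos: "0 < Qp q n" "0 < Rr q n n" using Qp_pos[OF q] Rr_pos[OF q] by auto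
  have "cmod (Tn q x n) * Rr q n n = cmod (Pfin (complex_of_real q) x n) * Qp q n"
    unfolding Tn norm_mult norm_of_real Qp_add using pos
    by (simp add: power2_eq_square field_simps)
  moreover have "(\<Prod>i<n. bf x (q ^ i)) * bf x (q ^ n) = bf x 1 * (\<Prod>m<n. bf x (q ^ Suc m))"
  proof -
    have 1: "(\<Prod>i<Suc n. bf x (q ^ i)) = bf x (q ^ 0) * (\<Prod>m<n. bf x (q ^ Suc m))"
      by (rule prod.lessThan_Suc_shift)
    have 2: "(\<Prod>i<Suc n. bf x (q ^ i)) = (\<Prod>i<n. bf x (q ^ i)) * bf x (q ^ n)"
      by (rule prod.lessThan_Suc)
    show ?thesis using 1 2 by simp
  qed
  ultimately show ?thesis
    unfolding norm_Pfin ff_def Qp_lessThan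
    by (simp add: prod.distrib mult_ac)
qed

definition fA :: "real \<Rightarrow> real" where "fA t = 1 - 424/100 * t + 9 * t\<^sup>2"
definition fB :: "real \<Rightarrow> real" where "fB t = 1 - 4711/10000 * t + t\<^sup>2 / 9"

lemma Re_bound:
  assumes "cmod x = 3" "3 * pi / 4 \<le> Arg x"
  shows "Re x \<le> - 53/25"
proof -
  have x0: "x \<noteq> 0" using assms by auto
  have "Arg x \<le> pi" by (rule Arg_le_pi)
  have "cos (Arg x) \<le> cos (3 * pi / 4)"
    using assms(2) \<open>Arg x \<le> pi\<close> by (intro cos_monotone_0_pi_le) auto
  also have "cos (3 * pi / 4) = - (sqrt 2 / 2)"
  proof -
    have "3 * pi / 4 = pi - pi / 4" by simp
    then show ?thesis by (simp only: cos_pi_minus cos_45)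
  qed
  finally have c: "cos (Arg x) \<le> - (sqrt 2 / 2)" .
  have "sqrt ((1414/1000)\<^sup>2) \<le> sqrt 2" by (subst real_sqrt_le_iff) (simp add: power2_eq_square)
  then have s: "1414/1000 \<le> sqrt 2" by simp
  have "Re x = 3 * cos (Arg x)" using cos_Arg[OF x0] assms(1) by simp
  then show ?thesis using c s by linarith
qed

lemma af_sq:
  assumes "cmod x = 3" "Re x \<le> - 53/25" "0 \<le> t"
  shows "(af x t)\<^sup>2 \<le> fA t"
proof -
  have n: "(Re x)\<^sup>2 + (Im x)\<^sup>2 = 9" using cmod_power2[of x] assms(1) by simp
  have "(af x t)\<^sup>2 = (1 + Re x * t)\<^sup>2 + (Im x * t)\<^sup>2"
    unfolding af_def cmod_power2 by simp
  also have "\<dots> = 1 + 2 * t * Re x + t\<^sup>2 * ((Re x)\<^sup>2 + (Im x)\<^sup>2)"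
    by (simp add: power2_eq_square algebra_simps)
  also have "\<dots> = 1 + 2 * t * Re x + 9 * t\<^sup>2" using n by simp
  also have "\<dots> \<le> fA t"
  proof -
    have "t * Re x \<le> t * (- 53/25)" using assms(2,3) by (rule mult_left_mono)
    then show ?thesis unfolding fA_def by simp
  qed
  finally show ?thesis .
qed

lemma bf_sq:
  assumes "cmod x = 3" "Re x \<le> - 53/25" "0 \<le> t"
  shows "(bf x t)\<^sup>2 \<le> fB t"
proof -
  have n: "(Re x)\<^sup>2 + (Im x)\<^sup>2 = 9" using cmod_power2[of x] assms(1) by simp
  have x0: "x \<noteq> 0" using assms(1) by auto
  have e: "complex_of_real t / x = complex_of_real (t / 9) * cnj x"
  proof -
    have "x * cnj x = 9" using complex_mult_cnj[of x] n by simp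
    then show ?thesis using x0 by (simp add: field_simps)
  qed
  have "(bf x t)\<^sup>2 = (1 + t / 9 * Re x)\<^sup>2 + (t / 9 * Im x)\<^sup>2"
    unfolding bf_def cmod_power2 e by simp
  also have "\<dots> = 1 + 2 * t / 9 * Re x + (t / 9)\<^sup>2 * ((Re x)\<^sup>2 + (Im x)\<^sup>2)"
    by (simp add: power2_eq_square algebra_simps)
  also have "\<dots> = 1 + 2 * t / 9 * Re x + t\<^sup>2 / 9" using n by (simp add: power2_eq_square)
  also have "\<dots> \<le> fB t"
  proof -
    have "t * Re x \<le> t * (- 53/25)" using assms(2,3) by (rule mult_left_mono)
    then have "2 * t / 9 * Re x \<le> - (4711/10000) * t" using assms(3) by linarith
    then show ?thesis unfolding fB_def by simp
  qed
  finally show ?thesis .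
qed

lemma fA_pos: "0 < fA t"
proof -
  have "fA t = 9 * (t - 53/225)\<^sup>2 + 25344/50625"
    unfolding fA_def by (simp add: power2_eq_square algebra_simps)
  moreover have "0 \<le> 9 * (t - 53/225)\<^sup>2" by simp
  ultimately show ?thesis by linarith
qed

lemma fB_pos: "0 < fB t"
proof -
  have e: "fB t = ((t - 42399/20000)\<^sup>2 + 1802324799/400000000) / 9"
    unfolding fB_def by (simp add: power2_eq_square algebra_simps)
  have "0 < (t - 42399/20000)\<^sup>2 + 1802324799/400000000"
    by (rule add_nonneg_pos) auto
  then show ?thesis unfolding e by simp
qed

lemma fB_le1: assumes "0 \<le> t" "t \<le> 1" shows "fB t \<le> 1"
proof -
  have "t\<^sup>2 \<le> t" using assms by (simp add: power2_eq_square mult_left_le_one_le)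
  then show ?thesis unfolding fB_def using assms by linarith
qed

lemma g_le1: assumes "0 \<le> t" "t \<le> 1" shows "(1 - t)\<^sup>2 * fA t \<le> 1"
proof (cases "t \<le> 47/100")
  case True
  have "9 * t\<^sup>2 \<le> 424/100 * t"
  proof -
    have "9 * t \<le> 424/100" using True by linarith
    then have "(9 * t) * t \<le> 424/100 * t" using assms(1) by (rule mult_right_mono)
    then show ?thesis by (simp add: power2_eq_square mult.assoc)
  qed
  then have "fA t \<le> 1" unfolding fA_def by linarith
  moreover have "(1 - t)\<^sup>2 \<le> 1" using assms by (simp add: power2_eq_square mult_le_one)
  ultimately show ?thesis using fA_pos[of t] by (simp add: mult_le_one less_imp_le)
next
  case False
  have "(1 - t)\<^sup>2 * fA t = (1 - t)\<^sup>2 * (1 - 424/100 * t) + 9 * (t * (1 - t))\<^sup>2"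
    unfolding fA_def by (simp add: power2_eq_square algebra_simps)
  moreover have "(1 - t)\<^sup>2 * (1 - 424/100 * t) \<le> 0"
    using False by (intro mult_nonneg_nonpos) auto
  moreover have "(t * (1 - t))\<^sup>2 \<le> (1/4)\<^sup>2"
  proof -
    have "t * (1 - t) \<le> 1/4" using zero_le_power2[of "t - 1/2"] by (simp add: power2_eq_square algebra_simps)
    moreover have "0 \<le> t * (1 - t)" using assms by simp
    ultimately show ?thesis by (intro power_mono) auto
  qed
  ultimately show ?thesis by (simp add: power2_eq_square)
qed

definition Fb :: "real \<Rightarrow> real" where "Fb t = (1 - t)\<^sup>2 * fA t * fB t"

lemma ff_bounds:
  assumes q: "0 < q" "q < 1" and x: "cmod x = 3" "Re x \<le> - 53/25"
  shows "0 \<le> ff q x m" "(ff q x m)\<^sup>2 \<le> Fb (q ^ m)" "ff q x m \<le> 1"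
proof -
  define t where "t = q ^ m"
  have t: "0 \<le> t" "t \<le> 1" using q unfolding t_def by (auto simp: power_le_one)
  show ge: "0 \<le> ff q x m" unfolding ff_def using t[unfolded t_def] by (simp add: af_def bf_def)
  have "(ff q x m)\<^sup>2 = (1 - t)\<^sup>2 * (af x t)\<^sup>2 * (bf x t)\<^sup>2"
    unfolding ff_def t_def by (simp add: power_mult_distrib)
  also have "\<dots> \<le> (1 - t)\<^sup>2 * fA t * fB t"
    using af_sq[OF x t(1)] bf_sq[OF x t(1)] fA_pos[of t]
    by (intro mult_mono) (auto intro: mult_nonneg_nonneg less_imp_le)
  finally show sq: "(ff q x m)\<^sup>2 \<le> Fb (q ^ m)" unfolding Fb_def t_def .
  have "Fb (q ^ m) \<le> 1"
  proof -
    have "(1 - t)\<^sup>2 * fA t * fB t \<le> 1 * 1"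
      using g_le1[OF t] fB_le1[OF t] fB_pos[of t] by (intro mult_mono) auto
    then show ?thesis unfolding Fb_def t_def by simp
  qed
  then have "(ff q x m)\<^sup>2 \<le> 1\<^sup>2" using sq by simp
  then show "ff q x m \<le> 1" by (rule power2_le_imp_le) simp
qed

lemma prod_bound3:
  assumes q: "0 < q" "q < 1" and x: "cmod x = 3" "Re x \<le> - 53/25" and n: "3 \<le> n"
  shows "(\<Prod>m<n. ff q x (Suc m)) \<le> ff q x 1 * ff q x 2 * ff q x 3"
proof -
  obtain k where k: "n = 3 + k" using n le_Suc_ex by blast
  have e: "(\<Prod>m<n. ff q x (Suc m)) = (\<Prod>m<3. ff q x (Suc m)) * (\<Prod>i<k. ff q x (Suc (3 + i)))"
    unfolding k by (rule prod_lessThan_add)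
  have e3: "(\<Prod>m<3. ff q x (Suc m)) = ff q x 1 * ff q x 2 * ff q x 3"
    by (simp add: numeral_3_eq_3 lessThan_Suc eval_nat_numeral mult_ac)
  have le: "(\<Prod>i<k. ff q x (Suc (3 + i))) \<le> 1"
    using ff_bounds[OF q x] by (intro prod_le_1) auto
  have nn: "0 \<le> ff q x 1 * ff q x 2 * ff q x 3"
    using ff_bounds(1)[OF q x] by simp
  show ?thesis unfolding e e3 using mult_left_mono[OF le nn] by simp
qed

lemma Rr_lower: assumes q: "0 < q" "q < 1" shows "1 - real n * q ^ n \<le> Rr q n n"
proof -
  have "1 + real n * (-(q ^ n)) \<le> (1 + (-(q ^ n))) ^ n"
    by (rule Bernoulli_inequality) (use q in \<open>simp add: power_le_one\<close>)
  also have "(1 + (-(q ^ n))) ^ n = (\<Prod>j<n. 1 - q ^ n)" by simp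
  also have "\<dots> \<le> Rr q n n" unfolding Rr_def
  proof (rule prod_mono)
    fix j assume "j \<in> {..<n}"
    have "q ^ (n + Suc j) \<le> q ^ n" using q by (intro power_decreasing) auto
    then show "0 \<le> 1 - q ^ n \<and> 1 - q ^ n \<le> 1 - q ^ (n + Suc j)"
      using q by (simp add: power_le_one)
  qed
  finally show ?thesis by simp
qed

lemma Theta_le_K:
  assumes q: "0 < q" "q < 1" and x: "cmod x = 3" "Re x \<le> - 53/25"
  shows "cmod (Theta_star q x) \<le> bf x 1 * ff q x 1 * ff q x 2 * ff q x 3"
proof -
  define K where "K = bf x 1 * ff q x 1 * ff q x 2 * ff q x 3"
  have x0: "x \<noteq> 0" using x by auto
  define X where "X n = cmod (Tn q x n) * (1 - real n * q ^ n) * bf x (q ^ n)" for n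
  have lim: "X \<longlonglongrightarrow> cmod (Theta_star q x) * (1 - 0) * bf x 0"
  proof -
    have "(\<lambda>n. real n * q ^ n) \<longlonglongrightarrow> 0"
      using powser_times_n_limit_0[of q] q by simp
    moreover have "(\<lambda>n. bf x (q ^ n)) \<longlonglongrightarrow> bf x 0"
      unfolding bf_def using q by (intro tendsto_intros LIMSEQ_power_zero) (auto simp: x0)
    ultimately show ?thesis unfolding X_def
      by (intro tendsto_intros Tn_tendsto[OF q x(1)])
  qed
  have "\<forall>n\<ge>3. X n \<le> K"
  proof (intro allI impI)
    fix n :: nat assume n: "3 \<le> n"
    have "X n \<le> cmod (Tn q x n) * Rr q n n * bf x (q ^ n)"
      unfolding X_def using Rr_lower[OF q, of n]
      by (intro mult_right_mono mult_left_mono) (auto simp: bf_def)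
    also have "\<dots> = bf x 1 * (\<Prod>m<n. ff q x (Suc m))" by (rule Tn_identity[OF q x0])
    also have "\<dots> \<le> bf x 1 * (ff q x 1 * ff q x 2 * ff q x 3)"
      by (rule mult_left_mono[OF prod_bound3[OF q x n]]) (simp add: bf_def)
    finally show "X n \<le> K" unfolding K_def by (simp add: mult_ac)
  qed
  then have "cmod (Theta_star q x) * (1 - 0) * bf x 0 \<le> K"
    by (intro LIMSEQ_le_const2[OF lim]) blast
  then show ?thesis unfolding K_def by (simp add: bf_def)
qed

lemma fA_max: assumes "lo \<le> t" "t \<le> hi" shows "fA t \<le> max (fA lo) (fA hi)"
proof (cases "9 * (t + lo) \<le> 424/100")
  case True
  have "fA t - fA lo = (t - lo) * (9 * (t + lo) - 424/100)"
    unfolding fA_def by (simp add: power2_eq_square field_simps)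
  moreover have "(t - lo) * (9 * (t + lo) - 424/100) \<le> 0"
    using True assms by (intro mult_nonneg_nonpos) auto
  ultimately show ?thesis by simp
next
  case False
  have "fA t - fA hi = (t - hi) * (9 * (t + hi) - 424/100)"
    unfolding fA_def by (simp add: power2_eq_square field_simps)
  moreover have "(t - hi) * (9 * (t + hi) - 424/100) \<le> 0"
    using False assms by (intro mult_nonpos_nonneg) auto
  ultimately show ?thesis by simp
qed

lemma fB_anti: assumes "0 \<le> lo" "lo \<le> t" "t \<le> 1" shows "fB t \<le> fB lo"
proof -
  have "fB t - fB lo = (t - lo) * ((t + lo) / 9 - 4711/10000)"
    unfolding fB_def by (simp add: power2_eq_square field_simps)
  moreover have "(t - lo) * ((t + lo) / 9 - 4711/10000) \<le> 0"
    using assms by (intro mult_nonneg_nonpos) auto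
  ultimately show ?thesis by simp
qed

definition U :: "real \<Rightarrow> real \<Rightarrow> real" where
  "U lo hi = (1 - lo)\<^sup>2 * max (fA lo) (fA hi) * fB lo"

lemma Fb_nonneg: "t \<le> 1 \<Longrightarrow> 0 \<le> Fb t"
  unfolding Fb_def using fA_pos[of t] fB_pos[of t] by simp

lemma Fb_le: assumes "0 \<le> lo" "lo \<le> t" "t \<le> hi" "hi \<le> 1" shows "Fb t \<le> U lo hi"
  unfolding Fb_def U_def
proof (intro mult_mono)
  show "(1 - t)\<^sup>2 \<le> (1 - lo)\<^sup>2" using assms by (intro power_mono) auto
  show "fA t \<le> max (fA lo) (fA hi)" using assms by (intro fA_max) auto
  show "fB t \<le> fB lo" using assms by (intro fB_anti) auto
  have "0 \<le> max (fA lo) (fA hi)" using fA_pos[of lo] by (simp add: le_max_iff_disj)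
  then show "0 \<le> (1 - lo)\<^sup>2 * max (fA lo) (fA hi)" by simp
qed (use fA_pos fB_pos in \<open>auto intro: less_imp_le\<close>)

lemma Pb_le:
  assumes "0 \<le> lo" "lo \<le> q" "q \<le> hi" "hi \<le> 1"
  shows "fB 1 * Fb q * Fb (q^2) * Fb (q^3) \<le> fB 1 * U lo hi * U (lo^2) (hi^2) * U (lo^3) (hi^3)"
proof -
  have q: "0 \<le> q" "q \<le> 1" using assms by auto
  have p: "lo ^ k \<le> q ^ k" "q ^ k \<le> hi ^ k" "0 \<le> lo ^ k" "hi ^ k \<le> 1" "q ^ k \<le> 1" for k
    using assms by (auto intro: power_mono power_le_one)
  show ?thesis
    using Fb_le[OF p(3) p(1) p(2) p(4), of 1] Fb_le[OF p(3) p(1) p(2) p(4), of 2]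
      Fb_le[OF p(3) p(1) p(2) p(4), of 3]
      Fb_nonneg[OF p(5), of 1] Fb_nonneg[OF p(5), of 2] Fb_nonneg[OF p(5), of 3]
      fB_pos[of 1]
    by (intro mult_mono) (auto intro: mult_nonneg_nonneg less_imp_le)
qed

lemma num_bound:
  assumes "1/2 \<le> q" "q < 1"
  shows "fB 1 * Fb q * Fb (q^2) * Fb (q^3) < 1/36"
proof -
  have key: "fB 1 * Fb q * Fb (q^2) * Fb (q^3) < 1/36" if "lo \<le> q" "q \<le> hi" "0 \<le> lo" "hi \<le> 1"
    and "fB 1 * U lo hi * U (lo^2) (hi^2) * U (lo^3) (hi^3) < 1/36" for lo hi
    using Pb_le[of lo q hi] that by linarith
  consider "q \<le> 11/20" | "11/20 \<le> q" "q \<le> 13/20" | "13/20 \<le> q" "q \<le> 7/10"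
    | "7/10 \<le> q" "q \<le> 3/4" | "3/4 \<le> q" "q \<le> 4/5" | "4/5 \<le> q" "q \<le> 17/20"
    | "17/20 \<le> q" "q \<le> 9/10" | "9/10 \<le> q" by linarith
  then show ?thesis
  proof cases
    case 1 then show ?thesis using assms by (intro key[of "1/2" "11/20"]) (auto simp: U_def fA_def fB_def power2_eq_square eval_nat_numeral)
  next
    case 2 then show ?thesis by (intro key[of "11/20" "13/20"]) (auto simp: U_def fA_def fB_def power2_eq_square eval_nat_numeral)
  next
    case 3 then show ?thesis by (intro key[of "13/20" "7/10"]) (auto simp: U_def fA_def fB_def power2_eq_square eval_nat_numeral)
  next
    case 4 then show ?thesis by (intro key[of "7/10" "3/4"]) (auto simp: U_def fA_def fB_def power2_eq_square eval_nat_numeral)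
  next
    case 5 then show ?thesis by (intro key[of "3/4" "4/5"]) (auto simp: U_def fA_def fB_def power2_eq_square eval_nat_numeral)
  next
    case 6 then show ?thesis by (intro key[of "4/5" "17/20"]) (auto simp: U_def fA_def fB_def power2_eq_square eval_nat_numeral)
  next
    case 7 then show ?thesis by (intro key[of "17/20" "9/10"]) (auto simp: U_def fA_def fB_def power2_eq_square eval_nat_numeral)
  next
    case 8 then show ?thesis using assms by (intro key[of "9/10" "1"]) (auto simp: U_def fA_def fB_def power2_eq_square eval_nat_numeral)
  qed
qed

lemma u_neg_le: assumes "0 < q" "q < 1" "cmod x = 3"
  shows "norm (u q x (- int k - 1)) \<le> (1/3) * (1/3) ^ k"
proof -
  have "q ^ tr (Suc k) \<le> 1" using assms by (simp add: power_le_one)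
  then have "q ^ tr (Suc k) / 3 ^ Suc k \<le> 1 / 3 ^ Suc k" by (simp add: divide_right_mono)
  also have "\<dots> = (1/3) * (1/3) ^ k" by (simp add: power_one_over)
  finally show ?thesis using norm_u_neg[OF assms(1,3)] by simp
qed

lemma G_lower:
  assumes q: "0 < q" "q < 1" and x: "cmod x = 3"
  shows "1/6 \<le> cmod (Gfun q x)"
proof -
  define f where "f k = u q x (- int k - 1)" for k
  have x0: "x \<noteq> 0" using x by auto
  have sf: "summable f" unfolding f_def
    by (rule summable_norm_cancel[OF summable_neg[OF q x]])
  have G: "Gfun q x = (\<Sum>n. f (n + 2)) + (f 0 + f 1)"
    unfolding decomp(2)[OF q x] f_def[symmetric] using suminf_split_initial_segment[OF sf, of 2]
    by (simp add: eval_nat_numeral)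
  have f0: "f 0 = 1 / x"
    unfolding f_def u_def using tcoef_neg[of q 0] powi_neg[of x 0] by (simp add: tr_def divide_inverse)
  have f1: "f 1 = complex_of_real q / x ^ 2"
    unfolding f_def u_def using tcoef_neg[of q 1] powi_neg[of x 1] by (simp add: tr_def divide_inverse power2_eq_square)
  have "f 0 + f 1 = (x + complex_of_real q) / x ^ 2"
    unfolding f0 f1 using x0 by (simp add: field_simps power2_eq_square)
  then have n01: "cmod (f 0 + f 1) = cmod (x + complex_of_real q) / 9"
    using x by (simp add: norm_divide norm_power)
  have "3 \<le> cmod (x + complex_of_real q) + q"
    using norm_triangle_ineq4[of "x + complex_of_real q" "complex_of_real q"] x q by simp
  then have a: "2/9 \<le> cmod (f 0 + f 1)" unfolding n01 using q by simp
  have sn: "summable (\<lambda>n. norm (f (n + 2)))"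
    using summable_ignore_initial_segment[OF summable_neg[OF q x], of 2] unfolding f_def .
  have sg: "summable (\<lambda>n. (1/27::real) * (1/3) ^ n)"
    by (intro summable_mult summable_geometric) simp
  have "norm (\<Sum>n. f (n + 2)) \<le> (\<Sum>n. norm (f (n + 2)))" by (rule summable_norm[OF sn])
  also have "\<dots> \<le> (\<Sum>n. (1/27::real) * (1/3) ^ n)"
  proof (rule suminf_le[OF _ sn sg])
    fix n
    have "norm (f (n + 2)) \<le> (1/3) * (1/3) ^ (n + 2)" unfolding f_def by (rule u_neg_le[OF q x])
    then show "norm (f (n + 2)) \<le> (1/27) * (1/3) ^ n" by (simp add: power_add)
  qed
  also have "\<dots> = 1/18"
    by (subst suminf_mult[OF summable_geometric]) (auto simp: suminf_geometric)
  finally have b: "norm (\<Sum>n. f (n + 2)) \<le> 1/18" .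
  have "cmod (f 0 + f 1) \<le> cmod (Gfun q x) + norm (\<Sum>n. f (n + 2))"
    unfolding G using norm_triangle_ineq4[of "(\<Sum>n. f (n + 2)) + (f 0 + f 1)" "\<Sum>n. f (n + 2)"]
    by (simp add: add.commute)
  then show ?thesis using a b by linarith
qed

theorem lemma5:
  fixes q :: real and x :: complex
  assumes "0.5 \<le> q" and "q < 1"
    and "cmod x = 3" and "3 * pi / 4 \<le> Arg x" and "Arg x \<le> pi"
  shows "cmod (Gfun q x) > cmod (Theta_star q x) \<and> cmod (ptheta q x) > 0"
proof -
  have q: "0 < q" "q < 1" using assms(1,2) by auto
  have x: "cmod x = 3" "Re x \<le> - 53/25" using assms(3) Re_bound[OF assms(3,4)] by auto
  define K where "K = bf x 1 * ff q x 1 * ff q x 2 * ff q x 3"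
  have f0: "0 \<le> ff q x m" "(ff q x m)\<^sup>2 \<le> Fb (q ^ m)" for m using ff_bounds[OF q x] by auto
  have b0: "0 \<le> bf x 1" by (simp add: bf_def)
  have b1: "(bf x 1)\<^sup>2 \<le> fB 1" using bf_sq[OF x, of 1] by simp
  have K0: "0 \<le> K" unfolding K_def using f0 b0 by simp
  have "K\<^sup>2 = (bf x 1)\<^sup>2 * (ff q x 1)\<^sup>2 * (ff q x 2)\<^sup>2 * (ff q x 3)\<^sup>2"
    unfolding K_def by (simp add: power_mult_distrib)
  also have "\<dots> \<le> fB 1 * Fb q * Fb (q^2) * Fb (q^3)"
  proof -
    have p: "q ^ m \<le> 1" for m using q by (simp add: power_le_one)
    have "0 \<le> fB 1" using fB_pos[of 1] by simp
    moreover have "0 \<le> Fb q" using Fb_nonneg[OF p[of 1]] by simp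
    moreover have "0 \<le> Fb (q^2)" by (rule Fb_nonneg[OF p])
    ultimately show ?thesis
      using b1 f0(2)[of 1] f0(2)[of 2] f0(2)[of 3]
      by (intro mult_mono) (auto intro: mult_nonneg_nonneg simp del: power_Suc)
  qed
  also have "\<dots> < 1/36" using num_bound assms(1,2) by simp
  finally have "K\<^sup>2 < (1/6)\<^sup>2" by (simp add: power2_eq_square)
  then have K6: "K < 1/6" by (rule power_less_imp_less_base) simp
  have T: "cmod (Theta_star q x) \<le> K" unfolding K_def by (rule Theta_le_K[OF q x])
  have G: "1/6 \<le> cmod (Gfun q x)" by (rule G_lower[OF q x(1)])
  have 1: "cmod (Gfun q x) > cmod (Theta_star q x)" using T K6 G by linarith
  have "ptheta q x = Theta_star q x - Gfun q x"
    using decomp[OF q x(1)] by simp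
  then have "cmod (Gfun q x) - cmod (Theta_star q x) \<le> cmod (ptheta q x)"
    using norm_triangle_ineq3[of "Gfun q x" "Theta_star q x"] by (simp add: norm_minus_commute)
  then show ?thesis using 1 by linarith
qed


end
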